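(* Let $k\ge 1$ be an integer, and fix $r>0$ and $0<\beta<1$. Then there exists a finite metric space $(X,\rho)$, equipped with the counting measure $\mu(A)=|A|$, such that (i) $M(X)=0$; (ii) $T_{k+1}(X)\le \dfrac{1}{(k+1)!}\,\beta\,|X|^{k+1}$; (iii) $|X|-\mu(\mathcal{X}^* )\ge \dfrac{1}{k+1}\,\beta^{1/k}\,|X|$, where $\mathcal{X}^*$ is an $r$-cluster structure of order $k$ of maximal measure in $X$.
   Context: For a metric space $(X,\rho)$ with a measure $\mu$ and a fixed $r>0$: an $s$-cluster is a measurable subset of $X$ of diameter at most $s$. For sets $A,B$, $\rho(A,B)=\inf\{\rho(x,y): x\in A, y\in B\}$. An $r$-cluster structure of order $k$ is a family $\mathcal{X}=\{X_1,\dots,X_k\}$ of $2r$-clusters with $\rho(X_i,X_j)\ge r$ for all $1\le i<j\le k$; its measure is $\mu(\mathcal{X})=\sum_{i=1}^k\mu(X_i)$. Define $M(X)=\frac12(\mu\otimes\mu)\{(x,y)\in X^2: r<\rho(x,y)\le 3r\}$ and, for an integer $m\ge1$, $T_m(X)=\frac{1}{m!}\mu^{\otimes m}\{(x_1,\dots,x_m)\in X^m: \rho(x_i,x_j)>r \text{ for all } 1\le i<j\le m\}$. *)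

theory Defs
  imports "HOL-Analysis.Analysis"
begin

text \<open>The measure is the counting measure, so every subset is measurable and
 mu(A) = card A.\<close>

definition metric_on :: "nat set \<Rightarrow> (nat \<Rightarrow> nat \<Rightarrow> real) \<Rightarrow> bool" where
  "metric_on X \<rho> \<longleftrightarrow>
     (\<forall>x\<in>X. \<forall>y\<in>X. 0 \<le> \<rho> x y \<and> (\<rho> x y = 0 \<longleftrightarrow> x = y) \<and> \<rho> x y = \<rho> y x) \<and>
     (\<forall>x\<in>X. \<forall>y\<in>X. \<forall>z\<in>X. \<rho> x z \<le> \<rho> x y + \<rho> y z)"

definition is_cluster :: "nat set \<Rightarrow> (nat \<Rightarrow> nat \<Rightarrow> real) \<Rightarrow> real \<Rightarrow> nat set \<Rightarrow> bool" where
  "is_cluster X \<rho> s A \<longleftrightarrow> A \<subseteq> X \<and> (\<forall>x\<in>A. \<forall>y\<in>A. \<rho> x y \<le> s)"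

text \<open>rho(A,B) >= r, with inf over the empty set = +infinity.\<close>
definition set_dist_ge :: "(nat \<Rightarrow> nat \<Rightarrow> real) \<Rightarrow> nat set \<Rightarrow> nat set \<Rightarrow> real \<Rightarrow> bool" where
  "set_dist_ge \<rho> A B r \<longleftrightarrow> (\<forall>x\<in>A. \<forall>y\<in>B. r \<le> \<rho> x y)"

definition cluster_structure ::
  "nat set \<Rightarrow> (nat \<Rightarrow> nat \<Rightarrow> real) \<Rightarrow> real \<Rightarrow> nat \<Rightarrow> (nat \<Rightarrow> nat set) \<Rightarrow> bool" where
  "cluster_structure X \<rho> r k Cs \<longleftrightarrow>
     (\<forall>i<k. is_cluster X \<rho> (2 * r) (Cs i)) \<and>
     (\<forall>i j. i < j \<and> j < k \<longrightarrow> set_dist_ge \<rho> (Cs i) (Cs j) r)"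

definition cs_measure :: "nat \<Rightarrow> (nat \<Rightarrow> nat set) \<Rightarrow> nat" where
  "cs_measure k Cs = (\<Sum>i<k. card (Cs i))"

definition max_cs_measure :: "nat set \<Rightarrow> (nat \<Rightarrow> nat \<Rightarrow> real) \<Rightarrow> real \<Rightarrow> nat \<Rightarrow> nat" where
  "max_cs_measure X \<rho> r k = Max {cs_measure k Cs | Cs. cluster_structure X \<rho> r k Cs}"

definition M_fun :: "nat set \<Rightarrow> (nat \<Rightarrow> nat \<Rightarrow> real) \<Rightarrow> real \<Rightarrow> real" where
  "M_fun X \<rho> r = (1/2) * real (card {(x,y) \<in> X \<times> X. r < \<rho> x y \<and> \<rho> x y \<le> 3 * r})"

definition T_fun :: "nat set \<Rightarrow> (nat \<Rightarrow> nat \<Rightarrow> real) \<Rightarrow> real \<Rightarrow> nat \<Rightarrow> real" where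
  "T_fun X \<rho> r m = (1 / fact m) *
     real (card {xs \<in> PiE {..<m} (\<lambda>_. X). \<forall>i j. i < j \<and> j < m \<longrightarrow> r < \<rho> (xs i) (xs j)})"

end

theory Submission
  imports Defs
begin


definition rh :: "nat \<Rightarrow> real \<Rightarrow> nat \<Rightarrow> nat \<Rightarrow> real" where
  "rh B r x y = (if x = y then 0 else if x < B \<and> y < B then r/2 else 4*r)"

lemma bern: fixes e :: real assumes "0 \<le> e" "e \<le> 1" shows "(1+e)^k \<le> 1 + (2^k - 1) * e"
proof (induction k)
  case 0 then show ?case by simp
next
  case (Suc k)
  have "(1+e)^Suc k = (1+e)*(1+e)^k" by simp
  also have "\<dots> \<le> (1+e)*(1 + (2^k - 1) * e)" using Suc assms by (intro mult_left_mono) auto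
  also have "\<dots> = 1 + 2^k*e + (2^k-1)*e*e" by (simp add: algebra_simps)
  also have "\<dots> \<le> 1 + 2^k*e + (2^k-1)*e"
  proof -
    have "(2::real)^k \<ge> 1" by simp
    then have "(2^k-1)*e*e \<le> (2^k-1)*e*1" using assms by (intro mult_left_mono) auto
    then show ?thesis by simp
  qed
  also have "\<dots> = 1 + (2^Suc k - 1) * e" by (simp add: algebra_simps)
  finally show ?case .
qed

lemma rh_metric: assumes "r > 0" shows "metric_on X (rh B r)"
  using assms unfolding metric_on_def rh_def by auto

lemma rh_M: assumes "r > 0" shows "M_fun X (rh B r) r = 0"
proof -
  have e: "{(x,y) \<in> X \<times> X. r < rh B r x y \<and> rh B r x y \<le> 3 * r} = {}"
    using assms unfolding rh_def by auto
  show ?thesis unfolding M_fun_def e by simp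
qed

lemma cluster_shape:
  assumes "r > 0" "is_cluster {..<B+L} (rh B r) (2*r) C"
  shows "C \<subseteq> {..<B} \<or> (C \<inter> {..<B} = {} \<and> card C \<le> 1)"
proof -
  have CX: "C \<subseteq> {..<B+L}" and d: "\<forall>x\<in>C. \<forall>y\<in>C. rh B r x y \<le> 2*r"
    using assms(2) unfolding is_cluster_def by auto
  have fin: "finite C" using CX finite_subset by blast
  show ?thesis
  proof (cases "C \<inter> {..<B} = {}")
    case True
    have "\<forall>x\<in>C. \<forall>y\<in>C. x = y"
    proof (intro ballI)
      fix x y assume "x \<in> C" "y \<in> C"
      then show "x = y" using d True assms(1) unfolding rh_def
        by (smt (verit, del_insts) disjoint_iff lessThan_iff)
    qed
    then have "card C \<le> 1" using card_le_Suc0_iff_eq[OF fin] by simp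
    then show ?thesis using True by simp
  next
    case False
    then obtain a where a: "a \<in> C" "a < B" by auto
    have "C \<subseteq> {..<B}"
    proof
      fix b assume b: "b \<in> C"
      show "b \<in> {..<B}"
      proof (rule ccontr)
        assume "b \<notin> {..<B}"
        then have "rh B r a b = 4*r" using a unfolding rh_def by auto
        then show False using d a b assms(1) by fastforce
      qed
    qed
    then show ?thesis by simp
  qed
qed

lemma cs_bound:
  assumes "r > 0" "k \<ge> 1" "B \<ge> 1" "cluster_structure {..<B+L} (rh B r) r k Cs"
  shows "cs_measure k Cs + 1 \<le> B + k"
proof -
  have cl: "\<And>i. i < k \<Longrightarrow> is_cluster {..<B+L} (rh B r) (2*r) (Cs i)"
   and sep: "\<And>i j. i < j \<Longrightarrow> j < k \<Longrightarrow> set_dist_ge (rh B r) (Cs i) (Cs j) r"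
    using assms(4) unfolding cluster_structure_def by auto
  have sh: "\<And>i. i < k \<Longrightarrow> Cs i \<subseteq> {..<B} \<or> (Cs i \<inter> {..<B} = {} \<and> card (Cs i) \<le> 1)"
    using cluster_shape[OF assms(1) cl] by blast
  have cardB: "\<And>i. i < k \<Longrightarrow> Cs i \<subseteq> {..<B} \<Longrightarrow> card (Cs i) \<le> B"
    by (metis card_lessThan card_mono finite_lessThan)
  have uniq: "i = j" if ij: "i < k" "j < k" "Cs i \<inter> {..<B} \<noteq> {}" "Cs j \<inter> {..<B} \<noteq> {}" for i j
  proof (rule ccontr)
    assume nij: "i \<noteq> j"
    obtain a where a: "a \<in> Cs i" "a < B" using ij(3) by auto
    obtain b where b: "b \<in> Cs j" "b < B" using ij(4) by auto
    have sym: "rh B r x y = rh B r y x" for x y unfolding rh_def by auto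
    have le: "rh B r a b \<le> r/2" using a b assms(1) unfolding rh_def by auto
    have "r \<le> rh B r a b"
    proof (cases "i < j")
      case True
      then have "set_dist_ge (rh B r) (Cs i) (Cs j) r" using sep ij(2) by blast
      then show ?thesis using a(1) b(1) unfolding set_dist_ge_def by blast
    next
      case False then have "j < i" using nij by simp
      then have "set_dist_ge (rh B r) (Cs j) (Cs i) r" using sep ij(1) by blast
      then have "r \<le> rh B r b a" using a(1) b(1) unfolding set_dist_ge_def by blast
      then show ?thesis using sym by simp
    qed
    then show False using le assms(1) by simp
  qed
  show ?thesis
  proof (cases "\<exists>i<k. Cs i \<inter> {..<B} \<noteq> {}")
    case False
    have "\<And>i. i < k \<Longrightarrow> card (Cs i) \<le> 1"
    proof -
      fix i assume i: "i < k"
      show "card (Cs i) \<le> 1"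
      proof (cases "Cs i \<subseteq> {..<B}")
        case True
        have "Cs i \<inter> {..<B} = {}" using False i by simp
        then have "Cs i = {}" using True by blast
        then show ?thesis by simp
      next
        case F2: False then show ?thesis using sh[OF i] by (elim disjE) auto
      qed
    qed
    then have "(\<Sum>i<k. card (Cs i)) \<le> (\<Sum>i<k. 1)" by (intro sum_mono) auto
    then show ?thesis using assms(3) unfolding cs_measure_def by simp
  next
    case True
    then obtain i0 where i0: "i0 < k" "Cs i0 \<inter> {..<B} \<noteq> {}" by auto
    have c0: "card (Cs i0) \<le> B"
      using sh[OF i0(1)]
    proof (elim disjE)
      assume "Cs i0 \<subseteq> {..<B}" then show ?thesis using cardB i0(1) by simp
    next
      assume "Cs i0 \<inter> {..<B} = {} \<and> card (Cs i0) \<le> 1" then show ?thesis using i0(2) by simp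
    qed
    have co: "\<And>i. i \<in> {..<k} - {i0} \<Longrightarrow> card (Cs i) \<le> 1"
    proof -
      fix i assume "i \<in> {..<k} - {i0}"
      then have ik: "i < k" "i \<noteq> i0" by auto
      have "Cs i \<inter> {..<B} = {}"
      proof (rule ccontr)
        assume "Cs i \<inter> {..<B} \<noteq> {}"
        then have "i = i0" using uniq[OF ik(1) i0(1)] i0(2) by blast
        then show False using ik by simp
      qed
      note e = this
      show "card (Cs i) \<le> 1" using sh[OF ik(1)]
      proof (elim disjE)
        assume "Cs i \<subseteq> {..<B}" then have "Cs i = {}" using e by blast
        then show ?thesis by simp
      qed simp
    qed
    have "(\<Sum>i<k. card (Cs i)) = card (Cs i0) + (\<Sum>i\<in>{..<k} - {i0}. card (Cs i))"
      using i0(1) by (simp add: sum.remove)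
    also have "\<dots> \<le> B + (\<Sum>i\<in>{..<k} - {i0}. 1)" using c0 co by (intro add_mono sum_mono) auto
    also have "\<dots> = B + (k - 1)" using i0(1) by simp
    finally show ?thesis using assms(2) unfolding cs_measure_def by simp
  qed
qed

lemma max_bound:
  assumes "r > 0" "k \<ge> 1" "B \<ge> 1"
  shows "max_cs_measure {..<B+L} (rh B r) r k + 1 \<le> B + k"
proof -
  let ?S = "{cs_measure k Cs | Cs. cluster_structure {..<B+L} (rh B r) r k Cs}"
  have ne: "?S \<noteq> {}"
  proof -
    have "cluster_structure {..<B+L} (rh B r) r k (\<lambda>_. {})"
      unfolding cluster_structure_def is_cluster_def set_dist_ge_def by auto
    then show ?thesis by blast
  qed
  have bd: "\<forall>x\<in>?S. x + 1 \<le> B + k" using cs_bound[OF assms] by blast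
  have fin: "finite ?S"
    by (rule finite_subset[of _ "{..B+k}"]) (use bd in auto)
  have "Max ?S \<in> ?S" using fin ne by (rule Max_in)
  then show ?thesis using bd unfolding max_cs_measure_def by blast
qed



lemma gen_eq: fixes a c p K :: real assumes "0<a" "0<c" "0<p" "0<K"
shows "a / (c * (p*a^2/(K*c^2))) = (K*c/a) / p"
  using assms by (simp add: field_simps power2_eq_square)

lemma arith_main:
  fixes c Lr nr :: real and k :: nat
  assumes k: "k \<ge> 1" and c: "0 < c" "c < 1" and L1: "Lr \<ge> c*nr" and L2: "Lr \<le> c*nr + k + 1"
    and n: "nr \<ge> 2^k*(real k+1)^2/(k*c^2)" and Ln: "Lr \<le> nr"
  shows "Lr^(k+1) + (real k+1)*((nr-Lr)*Lr^k) \<le> c^k*(real k+1)^k * nr^(k+1)"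
proof -
  define d where "d = k*c/(real k+1)"
  have kpos: "real k > 0" using k by simp
  have d0: "0 < d" using c kpos unfolding d_def by simp
  have "c * real k < 1 * real k" using c kpos by (intro mult_strict_right_mono) auto
  then have "real k * c < real k + 1" by (simp add: mult.commute)
  then have d1: "d < 1" unfolding d_def by (simp add: divide_less_eq add_pos_pos)
  have N0pos: "2^k*(real k+1)^2/(k*c^2) > (0::real)" using c kpos by simp
  then have npos: "nr > 0" using n by linarith
  define e where "e = (real k+1)/(c*nr)"
  have e0: "0 \<le> e" unfolding e_def using c npos by simp
  have "e \<le> (real k+1) / (c * (2^k*(real k+1)^2/(k*c^2)))"
  proof -
    have a: "c * (2^k*(real k+1)^2/(k*c^2)) \<le> c*nr" using n c by (intro mult_left_mono) auto
    have b: "0 < c*nr * (c * (2^k*(real k+1)^2/(k*c^2)))" using c npos N0pos by (intro mult_pos_pos) auto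
    show ?thesis unfolding e_def by (rule divide_left_mono[OF a _ b]) simp
  qed
  also have "\<dots> = d / 2^k" unfolding d_def
    using c kpos by (intro gen_eq) auto
  finally have ed: "e \<le> d / 2^k" .
  have "(2::real)^k \<ge> 1" by simp
  then have ed2: "2^k * e \<le> d" using ed by (simp add: field_simps)
  have e1: "e \<le> 1" using ed2 d1 \<open>(2::real)^k \<ge> 1\<close> e0
    by (smt (verit) mult_le_cancel_right1)
  have "c*nr*(1+e) = c*nr + (real k+1)" unfolding e_def using c npos by (simp add: field_simps)
  then have Lle: "Lr \<le> c*nr*(1+e)" using L2 by simp
  have "0 \<le> c*nr" using c npos by simp
  then have L0: "0 \<le> Lr" using L1 by linarith
  have "Lr^k \<le> (c*nr*(1+e))^k" using Lle L0 by (intro power_mono) auto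
  also have "\<dots> = (c*nr)^k * (1+e)^k" by (simp add: power_mult_distrib)
  also have "\<dots> \<le> (c*nr)^k * (1 + (2^k-1)*e)"
    using bern[OF e0 e1, of k] c npos by (intro mult_left_mono) auto
  also have "\<dots> \<le> (c*nr)^k * (1 + d)"
  proof -
    have "(2^k-1)*e \<le> 2^k * e" using e0 by (simp add: algebra_simps)
    then show ?thesis using ed2 c npos by (intro mult_left_mono) auto
  qed
  finally have Lk: "Lr^k \<le> (c*nr)^k * (1 + d)" .
  have eq: "Lr^(k+1) + (real k+1)*((nr-Lr)*Lr^k) = Lr^k * ((real k+1)*nr - k*Lr)"
    by (simp add: algebra_simps)
  have fac2: "(real k+1)*nr - k*Lr \<le> nr*(real k+1)*(1-d)"
  proof -
    have "k*(c*nr) \<le> k*Lr" using L1 by (intro mult_left_mono) auto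
    moreover have "nr*(real k+1)*(1-d) = (real k+1)*nr - k*(c*nr)" unfolding d_def by (simp add: field_simps)
    ultimately show ?thesis by linarith
  qed
  have "real k*Lr \<le> real k*nr" using Ln by (intro mult_left_mono) auto
  then have fac2pos: "0 \<le> (real k+1)*nr - k*Lr" using npos by (simp add: algebra_simps)
  have "Lr^k * ((real k+1)*nr - k*Lr) \<le> ((c*nr)^k * (1 + d)) * (nr*(real k+1)*(1-d))"
  proof -
    have "0 \<le> (c * nr) ^ k * (1 + d)" using c npos d0 by simp
    then show ?thesis by (rule mult_mono[OF Lk fac2 _ fac2pos])
  qed
  also have "\<dots> = (c*nr)^k * nr * (real k+1) * ((1+d)*(1-d))" by (simp add: algebra_simps)
  also have "\<dots> \<le> (c*nr)^k * nr * (real k+1) * 1"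
  proof -
    have "(1+d)*(1-d) \<le> 1" by (simp add: algebra_simps)
    moreover have "0 \<le> (c*nr)^k * nr * (real k+1)" using c npos by simp
    ultimately show ?thesis by (intro mult_left_mono) auto
  qed
  also have "\<dots> \<le> (c*nr)^k * nr * (real k+1)^k"
  proof -
    have "(real k+1) ^ 1 \<le> (real k+1)^k" using k by (intro power_increasing) auto
    then have "(real k+1) \<le> (real k+1)^k" by simp
    then have "(real k+1) \<le> (real k+1)^k" by simp
    moreover have "0 \<le> (c*nr)^k * nr" using c npos by simp
    ultimately have "(c*nr)^k * nr * (real k+1) \<le> (c*nr)^k * nr * (real k+1)^k" by (rule mult_left_mono)
    then show ?thesis by simp
  qed
  also have "\<dots> = c^k*(real k+1)^k * nr^(k+1)" by (simp add: power_mult_distrib algebra_simps)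
  finally show ?thesis using eq by simp
qed



lemma prod_if_j:
  assumes "j < m"
  shows "(\<Prod>i<m. card (if i = j then {..<B} else {B..<B+L})) = B * L^(m-1)"
proof -
  have "(\<Prod>i<m. card (if i = j then {..<B} else {B..<B+L})) =
        card (if j = j then {..<B} else {B..<B+L}) * (\<Prod>i\<in>{..<m}-{j}. card (if i = j then {..<B} else {B..<B+L}))"
    using assms by (simp add: prod.remove)
  also have "(\<Prod>i\<in>{..<m}-{j}. card (if i = j then {..<B} else {B..<B+L})) = (\<Prod>i\<in>{..<m}-{j}. L)"
    by (rule prod.cong) auto
  also have "\<dots> = L^(m-1)" using assms by simp
  finally show ?thesis by simp
qed

lemma T_card:
  assumes "r > 0"
  shows "card {xs \<in> PiE {..<m} (\<lambda>_. {..<B+L}). \<forall>i j. i < j \<and> j < m \<longrightarrow> r < rh B r (xs i) (xs j)}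
          \<le> L^m + m * (B * L^(m-1))"
proof -
  let ?S = "{xs \<in> PiE {..<m} (\<lambda>_. {..<B+L}). \<forall>i j. i < j \<and> j < m \<longrightarrow> r < rh B r (xs i) (xs j)}"
  let ?P0 = "PiE {..<m} (\<lambda>_. {B..<B+L})"
  let ?Pj = "\<lambda>j. PiE {..<m} (\<lambda>i. if i = j then {..<B} else {B..<B+L})"
  have sub: "?S \<subseteq> ?P0 \<union> (\<Union>j<m. ?Pj j)"
  proof
    fix xs assume xs: "xs \<in> ?S"
    then have pe: "xs \<in> PiE {..<m} (\<lambda>_. {..<B+L})"
      and far: "\<And>i j. i < j \<Longrightarrow> j < m \<Longrightarrow> r < rh B r (xs i) (xs j)" by auto
    have rng: "\<And>i. i < m \<Longrightarrow> xs i < B + L" using pe by (auto simp: PiE_def Pi_def)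
    have ext: "\<And>i. i \<notin> {..<m} \<Longrightarrow> xs i = undefined" using pe by (auto simp: PiE_def extensional_def)
    show "xs \<in> ?P0 \<union> (\<Union>j<m. ?Pj j)"
    proof (cases "\<exists>j<m. xs j < B")
      case False
      then have "xs \<in> ?P0" using rng ext by (auto simp: PiE_def Pi_def extensional_def)
      then show ?thesis by blast
    next
      case True
      then obtain j where j: "j < m" "xs j < B" by auto
      have oth: "B \<le> xs i" if i: "i < m" "i \<noteq> j" for i
      proof (rule ccontr)
        assume "\<not> B \<le> xs i"
        then have "rh B r (xs i) (xs j) \<le> r/2" "rh B r (xs j) (xs i) \<le> r/2"
          using j assms unfolding rh_def by auto
        moreover have "r < rh B r (xs i) (xs j) \<or> r < rh B r (xs j) (xs i)"
          using far i j by (cases "i < j") auto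
        ultimately show False using assms by auto
      qed
      have "xs \<in> ?Pj j" using rng ext oth j by (auto simp: PiE_def Pi_def extensional_def)
      then show ?thesis using j(1) by blast
    qed
  qed
  have "card ?S \<le> card (?P0 \<union> (\<Union>j<m. ?Pj j))"
    by (rule card_mono[OF _ sub]) (auto intro!: finite_PiE)
  also have "\<dots> \<le> card ?P0 + card (\<Union>j<m. ?Pj j)" by (rule card_Un_le)
  also have "card (\<Union>j<m. ?Pj j) \<le> (\<Sum>j<m. card (?Pj j))" by (rule card_UN_le) simp
  also have "(\<Sum>j<m. card (?Pj j)) = (\<Sum>j<m. B * L^(m-1))"
    by (rule sum.cong) (auto simp: card_PiE prod_if_j simp del: card_atLeastLessThan)
  also have "card ?P0 = L^m" by (simp add: card_PiE)
  finally show ?thesis by simp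
qed



theorem mainTheorem1:
  fixes k :: nat and r \<beta> :: real
  assumes "k \<ge> 1" and "r > 0" and "0 < \<beta>" and "\<beta> < 1"
  shows "\<exists>(X :: nat set) (\<rho> :: nat \<Rightarrow> nat \<Rightarrow> real).
           finite X \<and> X \<noteq> {} \<and> metric_on X \<rho> \<and>
           M_fun X \<rho> r = 0 \<and>
           T_fun X \<rho> r (k + 1) \<le> (1 / fact (k + 1)) * \<beta> * real (card X) ^ (k + 1) \<and>
           real (card X) - real (max_cs_measure X \<rho> r k)
             \<ge> (1 / real (k + 1)) * \<beta> powr (1 / real k) * real (card X)"
proof -
  have k: "k \<ge> 1" and r: "r > 0" using assms by auto
  define p where "p = \<beta> powr (1 / real k)"
  define c where "c = p / (real k + 1)"
  have p0: "0 < p" unfolding p_def using assms by simp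
  have p1: "p < 1" unfolding p_def using assms by (simp add: powr01_less_one)
  have pk: "p^k = \<beta>" unfolding p_def using assms by (simp add: powr_power)
  have c0: "0 < c" unfolding c_def using p0 by simp
  have cp: "c * (real k + 1) = p" unfolding c_def by simp
  have "c^k * (real k + 1)^k = (c * (real k + 1))^k" by (simp add: power_mult_distrib)
  then have ck: "c^k * (real k + 1)^k = \<beta>" using pk cp by simp
  have chalf: "c * 2 < 1"
  proof -
    have "c * 2 \<le> c * (real k + 1)" using k c0 by (intro mult_left_mono) auto
    then show ?thesis using cp p1 by linarith
  qed
  then have c1: "c < 1" by simp
  define N0 where "N0 = 2^k*(real k+1)^2/(real k*c^2)"
  define n where "n = nat \<lceil>N0\<rceil> + 2*k + 3"
  define nr where "nr = real n"
  have nN0: "nr \<ge> N0" unfolding nr_def n_def by linarith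
  have n2: "nr \<ge> 2*real k + 3" unfolding nr_def n_def by simp
  define L where "L = nat \<lceil>c*nr\<rceil> + k"
  have cn0: "0 \<le> c*nr" using c0 n2 by simp
  have L1: "real L \<ge> c*nr + k" unfolding L_def using cn0 by linarith
  have L2: "real L \<le> c*nr + k + 1" unfolding L_def using cn0 by linarith
  have "(c*2)*nr \<le> 1*nr" using chalf n2 by (intro mult_right_mono) auto
  then have "c*nr*2 \<le> nr" by (simp add: mult_ac)
  then have Ln: "real L < nr" using L2 n2 by linarith
  then have Lnn: "L < n" unfolding nr_def by simp
  define B where "B = n - L"
  have B1: "B \<ge> 1" unfolding B_def using Lnn by simp
  have BL: "B + L = n" unfolding B_def using Lnn by simp
  have rB: "real B = nr - real L" unfolding B_def nr_def using Lnn by (simp add: of_nat_diff)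
  define X where "X = {..<B+L}"
  have cardX: "card X = n" unfolding X_def BL by simp
  have ar: "real L^(k+1) + (real k+1)*((nr-real L)*real L^k) \<le> c^k*(real k+1)^k * nr^(k+1)"
    by (rule arith_main[OF k c0 c1]) (use L1 L2 nN0 Ln in \<open>auto simp: N0_def\<close>)
  have T: "T_fun X (rh B r) r (k + 1) \<le> (1 / fact (k + 1)) * \<beta> * real (card X) ^ (k + 1)"
  proof -
    have cS: "real (card {xs \<in> PiE {..<k+1} (\<lambda>_. X). \<forall>i j. i < j \<and> j < k+1 \<longrightarrow> r < rh B r (xs i) (xs j)})
       \<le> real (L^(k+1) + (k+1) * (B * L^(k+1-1)))"
      unfolding X_def using T_card[OF r, of "k+1" B L] by linarith
    also have "\<dots> = real L^(k+1) + (real k+1)*(real B*real L^k)" by (simp add: algebra_simps)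
    also have "\<dots> = real L^(k+1) + (real k+1)*((nr-real L)*real L^k)" by (simp only: rB)
    also have "\<dots> \<le> \<beta> * nr^(k+1)" using ar ck by simp
    finally have "real (card {xs \<in> PiE {..<k+1} (\<lambda>_. X). \<forall>i j. i < j \<and> j < k+1 \<longrightarrow> r < rh B r (xs i) (xs j)}) \<le> \<beta> * nr^(k+1)" .
    then show ?thesis unfolding T_fun_def cardX nr_def
      by (simp add: divide_right_mono)
  qed
  have mx: "max_cs_measure X (rh B r) r k + 1 \<le> B + k" unfolding X_def by (rule max_bound[OF r k B1])
  have iii: "real (card X) - real (max_cs_measure X (rh B r) r k) \<ge> (1 / real (k + 1)) * \<beta> powr (1 / real k) * real (card X)"
  proof -
    have "real (max_cs_measure X (rh B r) r k) + 1 \<le> real B + real k" using mx by (metis of_nat_add of_nat_1 of_nat_le_iff)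
    moreover have "(1 / real (k + 1)) * \<beta> powr (1 / real k) * real (card X) = c * nr"
      unfolding c_def p_def cardX nr_def by (simp add: add.commute)
    ultimately show ?thesis using rB L1 cardX unfolding nr_def by simp
  qed
  have "finite X" "X \<noteq> {}" using BL Lnn unfolding X_def by auto
  then show ?thesis using rh_metric[OF r] rh_M[OF r] T iii by blast
qed

end
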